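(* Let $\delta\in(0,1]$ and let $\mathbf y_1,\ldots,\mathbf y_r\in\mathbb{R}^d$ be $r\le d$ unit-norm vectors such that for every $i\le r$, $\|P_{\mathrm{Span}(\mathbf y_j,\,j<i)^\perp}(\mathbf y_i)\|\ge\delta$. Let $\mathbf Y=[\mathbf y_1,\ldots,\mathbf y_r]$ and $s\ge2$. Then there exist $\lceil r/s\rceil$ orthonormal vectors $\mathbf Z=[\mathbf z_1,\ldots,\mathbf z_{\lceil r/s\rceil}]$ such that for every $\mathbf a\in\mathbb{R}^d$, $$\|\mathbf Z^\top\mathbf a\|_\infty\le\left(\frac{\sqrt d}{\delta}\right)^{s/(s-1)}\|\mathbf Y^\top\mathbf a\|_\infty.$$
   Context: For a linear subspace $E\subseteq\mathbb{R}^d$, $P_E$ denotes the orthogonal projection onto $E$; $\mathrm{Span}(\emptyset)=\{0\}$. *)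

theory Defs
  imports "HOL-Analysis.Analysis"
begin

definition orth_proj :: "'a::euclidean_space set \<Rightarrow> 'a \<Rightarrow> 'a" where
  "orth_proj E x = (THE p. p \<in> E \<and> (\<forall>e\<in>E. orthogonal (x - p) e))"

end

theory Submission
  imports Defs "Jordan_Normal_Form.Determinant"
begin
hide_const (open) Matrix.orthogonal
no_notation Matrix.scalar_prod (infix "\<bullet>" 70)

lemma orth_proj_eq:
  fixes S :: "'a::euclidean_space set"
  assumes xw: "x = p + w" and p: "p \<in> span S" and w: "\<And>v. v \<in> span S \<Longrightarrow> orthogonal w v"
  shows "orth_proj (orthogonal_comp (span S)) x = w"
  unfolding orth_proj_def
proof (rule the_equality)
  show "w \<in> orthogonal_comp (span S) \<and> (\<forall>e\<in>orthogonal_comp (span S). orthogonal (x - w) e)"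
    using w p xw by (auto simp: orthogonal_comp_def orthogonal_commute)
next
  fix q assume q: "q \<in> orthogonal_comp (span S) \<and> (\<forall>e\<in>orthogonal_comp (span S). orthogonal (x - q) e)"
  have wE: "w \<in> orthogonal_comp (span S)"
    using w by (auto simp: orthogonal_comp_def orthogonal_commute)
  have d: "w - q \<in> orthogonal_comp (span S)"
    using subspace_orthogonal_comp[of "span S"] wE q by (simp add: subspace_diff)
  have "orthogonal (x - q) (w - q)" using q d by blast
  moreover have "x - q = p + (w - q)" using xw by simp
  moreover have "p \<bullet> (w - q) = 0" using d p unfolding orthogonal_comp_def real_inner_class.orthogonal_def by blast
  ultimately have "(w - q) \<bullet> (w - q) = 0"
    by (simp add: real_inner_class.orthogonal_def inner_add_left)
  then show "q = w" by simp
qed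

lemma span_image_coeffs:
  assumes "finite I" "inj_on f I" "x \<in> span (f ` I)"
  shows "\<exists>c. x = (\<Sum>i\<in>I. c i *\<^sub>R f i)"
proof -
  from assms have "x \<in> range (\<lambda>u. \<Sum>v\<in>f ` I. u v *\<^sub>R v)"
    using span_finite[of "f ` I"] by auto
  then obtain u where "x = (\<Sum>v\<in>f ` I. u v *\<^sub>R v)" by blast
  also have "\<dots> = (\<Sum>i\<in>I. u (f i) *\<^sub>R f i)" using assms(2) by (simp add: sum.reindex)
  finally show ?thesis by (rule exI[where x="\<lambda>i. u (f i)"])
qed

lemma mult_entry:
  assumes "A \<in> carrier_mat n k" "B \<in> carrier_mat k m" "i < n" "j < m"
  shows "(A * B) $$ (i,j) = (\<Sum>l<k. A $$ (i,l) * B $$ (l,j))"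
  using assms by (simp add: scalar_prod_def atLeast0LessThan)

lemma det_diag:
  assumes A: "A \<in> carrier_mat n n" and z: "\<And>i j. i < n \<Longrightarrow> j < n \<Longrightarrow> j < i \<Longrightarrow> A $$ (i,j) = 0"
  shows "Determinant.det A = (\<Prod>i<n. A $$ (i,i))"
proof -
  have "upper_triangular A" using A z by (intro upper_triangularI) auto
  then have "Determinant.det A = prod_list (diag_mat A)" using det_upper_triangular A by blast
  also have "\<dots> = (\<Prod>i=0..<n. A $$ (i,i))" using A prod_list_diag_prod by auto
  finally show ?thesis by (simp add: atLeast0LessThan)
qed

lemma det_sq:
  assumes "A \<in> carrier_mat n n"
  shows "Determinant.det (A * transpose_mat A) = (Determinant.det A)^2"
    "Determinant.det (transpose_mat A * A) = (Determinant.det A)^2"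
  using assms by (simp_all add: det_mult det_transpose power2_eq_square)

locale lsetting =
  fixes y :: "nat \<Rightarrow> 'a::euclidean_space" and r :: nat and \<delta> :: real
  assumes dpos: "0 < \<delta>" and unit: "\<And>i. i < r \<Longrightarrow> norm (y i) = 1"
    and resid: "\<And>i. i < r \<Longrightarrow> norm (orth_proj (orthogonal_comp (span (y ` {..<i}))) (y i)) \<ge> \<delta>"
begin

definition "W i = orth_proj (orthogonal_comp (span (y ` {..<i}))) (y i)"

lemma W_props:
  shows "y i - W i \<in> span (y ` {..<i})" "\<And>v. v \<in> span (y ` {..<i}) \<Longrightarrow> orthogonal (W i) v"
proof -
  obtain p w where p: "p \<in> span (y ` {..<i})" and w: "\<And>v. v \<in> span (y ` {..<i}) \<Longrightarrow> orthogonal w v"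
    and yi: "y i = p + w"
    by (rule orthogonal_subspace_decomp_exists[of "y ` {..<i}" "y i"]) blast
  have "W i = w" unfolding W_def by (rule orth_proj_eq[OF yi p w])
  then show "y i - W i \<in> span (y ` {..<i})" "\<And>v. v \<in> span (y ` {..<i}) \<Longrightarrow> orthogonal (W i) v"
    using p w yi by auto
qed

lemma W_norm: "i < r \<Longrightarrow> norm (W i) \<ge> \<delta>"
  using resid unfolding W_def by blast

lemma y_notin: assumes "i < r" shows "y i \<notin> span (y ` {..<i})"
proof
  assume a: "y i \<in> span (y ` {..<i})"
  have "W i \<in> span (y ` {..<i})"
    using span_diff[OF a W_props(1)[of i]] by simp
  then have "orthogonal (W i) (W i)" by (rule W_props(2))
  then have "W i = 0" by (simp add: real_inner_class.orthogonal_def)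
  with W_norm[OF assms] dpos show False by simp
qed

lemma dim_y: "m \<le> r \<Longrightarrow> dim (y ` {..<m}) = m"
proof (induction m)
  case 0 then show ?case by simp
next
  case (Suc m)
  have "y ` {..<Suc m} = insert (y m) (y ` {..<m})" by (simp add: lessThan_Suc)
  then show ?case using Suc y_notin[of m] by (simp add: dim_insert)
qed

lemma inj_y: "inj_on y {..<r}"
proof (rule inj_onI)
  fix i j assume ij: "i \<in> {..<r}" "j \<in> {..<r}" "y i = y j"
  show "i = j"
  proof (rule ccontr)
    assume "i \<noteq> j"
    then consider "i < j" | "j < i" by linarith
    then show False
    proof cases
      case 1 then have "y i \<in> span (y ` {..<j})" by (simp add: span_base)
      then show False using y_notin[of j] ij by simp
    next
      case 2 then have "y j \<in> span (y ` {..<i})" by (simp add: span_base)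
      then show False using y_notin[of i] ij by simp
    qed
  qed
qed

definition "V = span (y ` {..<r})"

lemma dim_V: "dim V = r" unfolding V_def using dim_y[of r] by (simp add: dim_span)

lemma W_in_V: assumes "i < r" shows "W i \<in> V"
proof -
  have s: "span (y ` {..<i}) \<subseteq> V" unfolding V_def using assms by (intro span_mono) auto
  have "y i \<in> V" unfolding V_def using assms by (simp add: span_base)
  moreover have "y i - W i \<in> V" using W_props(1)[of i] s by blast
  ultimately have "y i - (y i - W i) \<in> V" unfolding V_def by (rule span_diff)
  then show ?thesis by simp
qed

lemma W_orth: assumes "i < r" "j < r" "i \<noteq> j" shows "W i \<bullet> W j = 0"
proof -
  have key: "W a \<bullet> W b = 0" if "a < b" "b < r" for a b
  proof -
    have "y a \<in> span (y ` {..<b})" using that by (simp add: span_base)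
    moreover have "y a - W a \<in> span (y ` {..<b})"
    proof -
      have "y ` {..<a} \<subseteq> y ` {..<b}" using that by auto
      then show ?thesis using W_props(1)[of a] span_mono by blast
    qed
    ultimately have "y a - (y a - W a) \<in> span (y ` {..<b})" by (rule span_diff)
    then have "orthogonal (W b) (W a)" using W_props(2)[where i=b] by simp
    then show ?thesis by (simp add: real_inner_class.orthogonal_def inner_commute)
  qed
  show ?thesis using assms key[of i j] key[of j i] by (cases "i < j") (auto simp: inner_commute)
qed


definition "q x = (\<Sum>j<r. (y j \<bullet> x)^2)"
definition "bf x z = (\<Sum>j<r. (y j \<bullet> x) * (y j \<bullet> z))"

lemma q_expand: "q (a + t *\<^sub>R b) = q a + 2*t*bf a b + t^2 * q b"
  unfolding q_def bf_def
  by (simp add: inner_add_right power2_eq_square algebra_simps sum.distrib sum_distrib_left)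

lemma q_scale: "q (c *\<^sub>R x) = c^2 * q x"
  unfolding q_def by (simp add: power_mult_distrib sum_distrib_left)

lemma q_nonneg: "q x \<ge> 0" unfolding q_def by (simp add: sum_nonneg)

lemma q_le: "q x \<le> real r * (norm x)^2"
proof -
  have "(y j \<bullet> x)^2 \<le> (norm x)^2" if "j < r" for j
  proof -
    have "\<bar>y j \<bullet> x\<bar> \<le> norm (y j) * norm x" by (rule Cauchy_Schwarz_ineq2)
    then have "\<bar>y j \<bullet> x\<bar> \<le> norm x" using unit[OF that] by simp
    then show ?thesis by (metis abs_ge_zero power2_abs power_mono)
  qed
  then have "q x \<le> (\<Sum>j<r. (norm x)^2)" unfolding q_def by (intro sum_mono) auto
  then show ?thesis by simp
qed

lemma subspace_V: "subspace V" unfolding V_def by simp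

definition peel :: "(nat \<Rightarrow> 'a) \<Rightarrow> nat \<Rightarrow> bool" where "peel u m \<longleftrightarrow> (\<forall>i<m. u i \<in> V \<and> norm (u i) = 1 \<and> (\<forall>j<i. orthogonal (u j) (u i)) \<and>
    (\<forall>x\<in>V. (\<forall>j<i. orthogonal x (u j)) \<longrightarrow> q x \<le> q (u i) * (norm x)^2))"

lemma peel_step:
  assumes pu: "peel u m" and m: "m < r"
  shows "\<exists>u'. peel u' (Suc m)"
proof -
  define S where "S = {x\<in>V. \<forall>j<m. orthogonal x (u j)}"
  define K where "K = S \<inter> sphere 0 1"
  have closedS: "closed S"
  proof -
    have "S = V \<inter> (\<Inter>j<m. {x. inner (u j) x = 0})"
      unfolding S_def by (auto simp: real_inner_class.orthogonal_def inner_commute)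
    moreover have "closed V" unfolding V_def by simp
    ultimately show ?thesis by (auto intro!: closed_Int closed_INT closed_hyperplane)
  qed
  have compK: "compact K" unfolding K_def using closedS compact_sphere
    by (simp add: closed_Int_compact)
  have uV: "u ` {..<m} \<subseteq> V" using pu m unfolding peel_def by auto
  have "\<exists>v\<in>V. v \<notin> span (u ` {..<m})"
  proof (rule ccontr)
    assume "\<not> ?thesis"
    then have "V \<subseteq> span (u ` {..<m})" by auto
    then have "dim V \<le> card (u ` {..<m})" by (intro dim_le_card) auto
    also have "\<dots> \<le> m" using card_image_le[of "{..<m}" u] by simp
    finally show False using dim_V m by simp
  qed
  then obtain v where vV: "v \<in> V" and vn: "v \<notin> span (u ` {..<m})" by blast
  obtain p w where p: "p \<in> span (u ` {..<m})" and w: "\<And>z. z \<in> span (u ` {..<m}) \<Longrightarrow> orthogonal w z"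
    and vpw: "v = p + w"
    by (rule orthogonal_subspace_decomp_exists[of "u ` {..<m}" v]) blast
  have pV: "p \<in> V" using p span_minimal[OF uV subspace_V] by blast
  have wV: "w \<in> V" using vpw vV pV subspace_V
    by (metis add_diff_cancel_left' subspace_diff)
  have w0: "w \<noteq> 0" using vpw p vn by auto
  have wS: "w \<in> S" unfolding S_def using wV w by (auto intro: span_base)
  define w1 where "w1 = (1 / norm w) *\<^sub>R w"
  have scaleS: "c *\<^sub>R x \<in> S" if "x \<in> S" for c x
    using that subspace_V unfolding S_def
    by (auto simp: subspace_scale real_inner_class.orthogonal_def)
  have "w1 \<in> K" unfolding K_def w1_def using scaleS[OF wS] w0 by simp
  then have Kne: "K \<noteq> {}" by blast
  have contq: "continuous_on K q" unfolding q_def by (intro continuous_intros)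
  obtain x0 where x0K: "x0 \<in> K" and x0max: "\<And>z. z \<in> K \<Longrightarrow> q z \<le> q x0"
    using continuous_attains_sup[OF compK Kne contq] by blast
  have maxprop: "q x \<le> q x0 * (norm x)^2" if "x \<in> S" for x
  proof (cases "x = 0")
    case True then show ?thesis by (simp add: q_def)
  next
    case False
    have "(1 / norm x) *\<^sub>R x \<in> K" unfolding K_def using scaleS[OF that] False by simp
    then have "q ((1 / norm x) *\<^sub>R x) \<le> q x0" by (rule x0max)
    then have "q x / (norm x)^2 \<le> q x0" by (simp add: q_scale power_divide)
    then show ?thesis using False by (simp add: divide_le_eq)
  qed
  define u' where "u' = u(m := x0)"
  have "peel u' (Suc m)"
    unfolding peel_def
  proof (intro allI impI)
    fix i assume i: "i < Suc m"
    show "u' i \<in> V \<and> norm (u' i) = 1 \<and> (\<forall>j<i. orthogonal (u' j) (u' i)) \<and>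
      (\<forall>x\<in>V. (\<forall>j<i. orthogonal x (u' j)) \<longrightarrow> q x \<le> q (u' i) * (norm x)^2)"
    proof (cases "i = m")
      case True
      have "x0 \<in> S" "norm x0 = 1" using x0K unfolding K_def by auto
      then show ?thesis using True maxprop unfolding u'_def S_def
        by (auto simp: orthogonal_commute)
    next
      case False
      then have "i < m" using i by simp
      then show ?thesis using pu unfolding peel_def u'_def by auto
    qed
  qed
  then show ?thesis by blast
qed

lemma peel_exists: "m \<le> r \<Longrightarrow> \<exists>u. peel u m"
proof (induction m)
  case 0 then show ?case by (simp add: peel_def)
next
  case (Suc m)
  then obtain u where "peel u m" by auto
  then show ?case using peel_step Suc by auto
qed


lemma bf_comm: "bf a b = bf b a" unfolding bf_def by (simp add: mult.commute)

lemma lin_quad_zero: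
  fixes b c :: real
  assumes "\<And>t. 2*t*b \<le> t^2*c"
  shows "b = 0"
proof (rule ccontr)
  assume b: "b \<noteq> 0"
  define M where "M = \<bar>c\<bar> + 1"
  have M: "M > 0" unfolding M_def by simp
  have "2*(b/M)*b \<le> (b/M)^2*c" by (rule assms)
  then have "2*b^2/M \<le> b^2*c/M^2" by (simp add: power2_eq_square power_divide)
  then have "2*b^2*M \<le> b^2*c" using M by (simp add: field_simps power2_eq_square)
  then have "2*M \<le> c" using b by (simp add: mult.commute mult.left_commute)
  then show False unfolding M_def by (cases "c \<ge> 0") auto
qed

lemma peel_bf:
  assumes pu: "peel u m" and il: "i < l" and lm: "l < m"
  shows "bf (u i) (u l) = 0"
proof (rule lin_quad_zero[where c = "q (u i) - q (u l)"])
  fix t :: real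
  have im: "i < m" using il lm by simp
  have Pi: "u i \<in> V \<and> norm (u i) = 1 \<and> (\<forall>j<i. orthogonal (u j) (u i)) \<and>
    (\<forall>x\<in>V. (\<forall>j<i. orthogonal x (u j)) \<longrightarrow> q x \<le> q (u i) * (norm x)^2)"
    using pu im unfolding peel_def by blast
  have Pl: "u l \<in> V \<and> norm (u l) = 1 \<and> (\<forall>j<l. orthogonal (u j) (u l))"
    using pu lm unfolding peel_def by blast
  have ui: "u i \<in> V" "norm (u i) = 1" "\<forall>j<i. orthogonal (u j) (u i)"
    and mx: "\<forall>x\<in>V. (\<forall>j<i. orthogonal x (u j)) \<longrightarrow> q x \<le> q (u i) * (norm x)^2"
    using Pi by auto
  have ul: "u l \<in> V" "norm (u l) = 1" "\<forall>j<l. orthogonal (u j) (u l)"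
    using Pl by auto
  define x where "x = u i + t *\<^sub>R u l"
  have xV: "x \<in> V" unfolding x_def using ui ul subspace_V
    by (simp add: subspace_add subspace_scale)
  have xo: "\<forall>j<i. orthogonal x (u j)"
  proof (intro allI impI)
    fix j assume j: "j < i"
    have "u j \<bullet> u i = 0" "u j \<bullet> u l = 0" using ui ul j il
      by (auto simp: real_inner_class.orthogonal_def)
    then show "orthogonal x (u j)" unfolding x_def real_inner_class.orthogonal_def
      by (simp add: inner_add_left inner_commute[of "u j"])
  qed
  have il0: "u i \<bullet> u l = 0" using ul il by (simp add: real_inner_class.orthogonal_def)
  have a: "u i \<bullet> u i = 1" by (simp add: dot_square_norm ui(2))
  have b: "u l \<bullet> u l = 1" by (simp add: dot_square_norm ul(2))
  have nx: "(norm x)^2 = 1 + t^2"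
  proof -
    have "(norm x)^2 = x \<bullet> x" by (simp add: dot_square_norm)
    also have "\<dots> = 1 + t^2" unfolding x_def
      by (simp add: inner_add_left inner_add_right inner_commute[of "u l" "u i"] a b il0 power2_eq_square)
    finally show ?thesis .
  qed
  have "q x \<le> q (u i) * (norm x)^2" using mx xV xo by blast
  then have "q (u i) + 2*t*bf (u i) (u l) + t^2 * q (u l) \<le> q (u i) * (1 + t^2)"
    unfolding x_def[symmetric] q_expand nx by (simp add: x_def q_expand)
  then show "2*t*bf (u i) (u l) \<le> t^2 * (q (u i) - q (u l))" by (simp add: algebra_simps)
qed

lemma peel_mono:
  assumes pu: "peel u m" and il: "i \<le> l" and lm: "l < m"
  shows "q (u l) \<le> q (u i)"
proof -
  have im: "i < m" using il lm by simp
  have Pi: "u i \<in> V \<and> norm (u i) = 1 \<and> (\<forall>j<i. orthogonal (u j) (u i)) \<and>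
    (\<forall>x\<in>V. (\<forall>j<i. orthogonal x (u j)) \<longrightarrow> q x \<le> q (u i) * (norm x)^2)"
    using pu im unfolding peel_def by blast
  have Pl: "u l \<in> V \<and> norm (u l) = 1 \<and> (\<forall>j<l. orthogonal (u j) (u l))"
    using pu lm unfolding peel_def by blast
  have mx: "\<forall>x\<in>V. (\<forall>j<i. orthogonal x (u j)) \<longrightarrow> q x \<le> q (u i) * (norm x)^2"
    using Pi by auto
  have ul: "u l \<in> V" "norm (u l) = 1" "\<forall>j<l. orthogonal (u j) (u l)"
    using Pl by auto
  have "\<forall>j<i. orthogonal (u l) (u j)" using ul il by (auto simp: orthogonal_commute)
  then show ?thesis using mx ul by auto
qed


lemma u_orth:
  assumes pu: "peel u m" and "i < m" "l < m"
  shows "u i \<bullet> u l = (if i = l then 1 else 0)"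
proof -
  have Pi: "norm (u i) = 1" "\<forall>j<i. orthogonal (u j) (u i)" using pu assms(2) unfolding peel_def by blast+
  have Pl: "norm (u l) = 1" "\<forall>j<l. orthogonal (u j) (u l)" using pu assms(3) unfolding peel_def by blast+
  consider "i = l" | "i < l" | "l < i" by linarith
  then show ?thesis
  proof cases
    case 1 then show ?thesis using Pi by (simp add: dot_square_norm)
  next
    case 2 then show ?thesis using Pl by (simp add: real_inner_class.orthogonal_def)
  next
    case 3
    then have "u l \<bullet> u i = 0" using Pi by (simp add: real_inner_class.orthogonal_def)
    then show ?thesis using 3 by (simp add: inner_commute)
  qed
qed

lemma u_inV: "peel u m \<Longrightarrow> i < m \<Longrightarrow> u i \<in> V" unfolding peel_def by blast

lemma u_span:
  assumes pu: "peel u r"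
  shows "V \<subseteq> span (u ` {..<r})"
proof (rule card_ge_dim_independent)
  show "u ` {..<r} \<subseteq> V" using u_inV[OF pu] by auto
  have inj: "inj_on u {..<r}"
  proof (rule inj_onI)
    fix i j assume "i \<in> {..<r}" "j \<in> {..<r}" "u i = u j"
    then show "i = j" using u_orth[OF pu, of i j] u_orth[OF pu, of j j]
      by (metis lessThan_iff zero_neq_one)
  qed
  show "independent (u ` {..<r})"
  proof (rule pairwise_orthogonal_independent)
    show "pairwise orthogonal (u ` {..<r})"
      unfolding pairwise_def real_inner_class.orthogonal_def using u_orth[OF pu] by fastforce
    show "0 \<notin> u ` {..<r}" using u_orth[OF pu] by fastforce
  qed
  show "dim V \<le> card (u ` {..<r})" using dim_V card_image[OF inj] by simp
qed

lemma u_expand: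
  assumes pu: "peel u r" and xV: "x \<in> V"
  shows "x = (\<Sum>i<r. (u i \<bullet> x) *\<^sub>R u i)"
proof -
  define e where "e = x - (\<Sum>i<r. (u i \<bullet> x) *\<^sub>R u i)"
  have eo: "orthogonal e (u l)" if "l < r" for l
  proof -
    have "u l \<bullet> (\<Sum>i<r. (u i \<bullet> x) *\<^sub>R u i) = (\<Sum>i<r. (u i \<bullet> x) * (u l \<bullet> u i))"
      by (simp add: inner_sum_right)
    also have "\<dots> = (\<Sum>i<r. (if i = l then u l \<bullet> x else 0))"
      by (rule sum.cong) (auto simp: u_orth[OF pu that])
    also have "\<dots> = u l \<bullet> x" using that by simp
    finally have h: "u l \<bullet> (\<Sum>i<r. (u i \<bullet> x) *\<^sub>R u i) = u l \<bullet> x" .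
    have "u l \<bullet> e = 0" unfolding e_def using h by (simp only: inner_diff_right)
    then show ?thesis by (simp add: real_inner_class.orthogonal_def inner_commute)
  qed
  have "e \<in> span (u ` {..<r})" unfolding e_def
    using u_span[OF pu] xV by (intro span_diff span_sum span_scale) (auto intro: span_base)
  then have "orthogonal e e" by (rule orthogonal_to_span) (use eo in auto)
  then have "e = 0" by (simp add: real_inner_class.orthogonal_def)
  then show ?thesis unfolding e_def by simp
qed

lemma parseval:
  assumes pu: "peel u r" and "x \<in> V"
  shows "x \<bullet> z = (\<Sum>i<r. (u i \<bullet> x) * (u i \<bullet> z))"
proof -
  have "x \<bullet> z = (\<Sum>i<r. (u i \<bullet> x) *\<^sub>R u i) \<bullet> z" using u_expand[OF assms] by simp
  also have "\<dots> = (\<Sum>i<r. (u i \<bullet> x) * (u i \<bullet> z))" by (simp add: inner_sum_left)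
  finally show ?thesis .
qed


lemma coeffs_exist: "\<exists>\<alpha>. \<forall>j<r. y j - W j = (\<Sum>l<j. \<alpha> j l *\<^sub>R y l)"
proof -
  have "\<forall>j\<in>{..<r}. \<exists>c. y j - W j = (\<Sum>l<j. c l *\<^sub>R y l)"
  proof
    fix j assume j: "j \<in> {..<r}"
    have "inj_on y {..<j}" using j by (intro inj_on_subset[OF inj_y]) auto
    then show "\<exists>c. y j - W j = (\<Sum>l<j. c l *\<^sub>R y l)"
      using span_image_coeffs[of "{..<j}" y] W_props(1)[of j] by auto
  qed
  then show ?thesis by (metis lessThan_iff)
qed

lemma prod_eq:
  assumes pu: "peel u r"
  shows "(\<Prod>i<r. q (u i)) = (\<Prod>j<r. (norm (W j))^2)"
proof -
  obtain \<alpha> where \<alpha>: "\<And>j. j < r \<Longrightarrow> y j - W j = (\<Sum>l<j. \<alpha> j l *\<^sub>R y l)"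
    using coeffs_exist by blast
  define B where "B = Matrix.mat r r (\<lambda>(i,j). u i \<bullet> y j)"
  define T where "T = Matrix.mat r r (\<lambda>(l,j). if l = j then 1 else if l < j then - \<alpha> j l else (0::real))"
  define C where "C = B * T"
  have Bc: "B \<in> carrier_mat r r" unfolding B_def by simp
  have Tc: "T \<in> carrier_mat r r" unfolding T_def by simp
  have Cc: "C \<in> carrier_mat r r" unfolding C_def using Bc Tc by simp
  have detT: "Determinant.det T = 1"
  proof -
    have "Determinant.det T = (\<Prod>i<r. T $$ (i,i))"
      by (rule det_diag[OF Tc]) (simp add: T_def)
    also have "\<dots> = 1" by (simp add: T_def)
    finally show ?thesis .
  qed
  have detC: "Determinant.det C = Determinant.det B"
    unfolding C_def using det_mult[OF Bc Tc] detT by simp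
  have BB: "(B * transpose_mat B) $$ (i,l) = bf (u i) (u l)" if "i < r" "l < r" for i l
  proof -
    have "(B * transpose_mat B) $$ (i,l) = (\<Sum>j<r. B $$ (i,j) * transpose_mat B $$ (j,l))"
      by (rule mult_entry) (use Bc that in auto)
    also have "\<dots> = bf (u i) (u l)" unfolding bf_def
      by (rule sum.cong) (simp_all add: B_def that inner_commute)
    finally show ?thesis .
  qed
  have d1: "Determinant.det (B * transpose_mat B) = (\<Prod>i<r. q (u i))"
  proof -
    have "Determinant.det (B * transpose_mat B) = (\<Prod>i<r. (B * transpose_mat B) $$ (i,i))"
    proof (rule det_diag)
      show "B * transpose_mat B \<in> carrier_mat r r" using Bc by simp
      fix i j assume "i < r" "j < r" "j < i"
      then show "(B * transpose_mat B) $$ (i,j) = 0"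
        using BB peel_bf[OF pu, of j i] bf_comm by simp
    qed
    also have "\<dots> = (\<Prod>i<r. q (u i))"
      by (rule prod.cong) (simp_all add: BB q_def bf_def power2_eq_square)
    finally show ?thesis .
  qed
  have Centry: "C $$ (i,j) = u i \<bullet> W j" if "i < r" "j < r" for i j
  proof -
    have "C $$ (i,j) = (\<Sum>l<r. B $$ (i,l) * T $$ (l,j))"
      unfolding C_def by (rule mult_entry[OF Bc Tc that])
    also have "\<dots> = (\<Sum>l<r. (if l = j then u i \<bullet> y j else 0) + (if l < j then - \<alpha> j l * (u i \<bullet> y l) else 0))"
      by (rule sum.cong) (auto simp: B_def T_def that)
    also have "\<dots> = u i \<bullet> y j - (\<Sum>l<j. \<alpha> j l * (u i \<bullet> y l))"
    proof -
      have "(\<Sum>l<r. (if l < j then - \<alpha> j l * (u i \<bullet> y l) else 0)) = (\<Sum>l\<in>{..<r} \<inter> {l. l < j}. - \<alpha> j l * (u i \<bullet> y l))"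
        by (simp add: sum.If_cases)
      also have "{..<r} \<inter> {l. l < j} = {..<j}" using that by auto
      finally show ?thesis using that by (simp add: sum.distrib sum_negf)
    qed
    also have "\<dots> = u i \<bullet> W j"
    proof -
      have "W j = y j - (\<Sum>l<j. \<alpha> j l *\<^sub>R y l)" using \<alpha>[OF that(2)] by (simp add: algebra_simps)
      then show ?thesis by (simp add: inner_diff_right inner_sum_right)
    qed
    finally show ?thesis .
  qed
  have CC: "(transpose_mat C * C) $$ (j,m) = W j \<bullet> W m" if "j < r" "m < r" for j m
  proof -
    have "(transpose_mat C * C) $$ (j,m) = (\<Sum>i<r. C $$ (i,j) * C $$ (i,m))"
      using mult_entry[of "transpose_mat C" r r C r j m] Cc that by simp
    also have "\<dots> = (\<Sum>i<r. (u i \<bullet> W j) * (u i \<bullet> W m))"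
      by (rule sum.cong) (simp_all add: Centry that)
    also have "\<dots> = W j \<bullet> W m" using parseval[OF pu W_in_V[OF that(1)]] by simp
    finally show ?thesis .
  qed
  have d2: "Determinant.det (transpose_mat C * C) = (\<Prod>j<r. (norm (W j))^2)"
  proof -
    have "Determinant.det (transpose_mat C * C) = (\<Prod>i<r. (transpose_mat C * C) $$ (i,i))"
    proof (rule det_diag)
      show "transpose_mat C * C \<in> carrier_mat r r" using Cc by simp
      fix i j assume "i < r" "j < r" "j < i"
      then show "(transpose_mat C * C) $$ (i,j) = 0"
        using CC W_orth by simp
    qed
    also have "\<dots> = (\<Prod>j<r. (norm (W j))^2)"
      by (rule prod.cong) (simp_all add: CC dot_square_norm)
    finally show ?thesis .
  qed
  show ?thesis using d1 d2 det_sq[OF Bc] det_sq[OF Cc] detC by simp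
qed


lemma lam_prod: assumes pu: "peel u r" shows "(\<Prod>i<r. q (u i)) \<ge> \<delta>^(2*r)"
proof -
  have "\<delta>^(2*r) = (\<Prod>j<r. \<delta>^2)" by (simp add: power_mult)
  also have "\<dots> \<le> (\<Prod>j<r. (norm (W j))^2)"
    by (rule prod_mono) (use dpos W_norm in \<open>auto intro: power_mono\<close>)
  also have "\<dots> = (\<Prod>i<r. q (u i))" using prod_eq[OF pu] by simp
  finally show ?thesis .
qed

lemma lam_k:
  assumes pu: "peel u r" and kr: "\<kappa> < r"
  shows "q (u \<kappa>)^(r-\<kappa>) * real r^\<kappa> \<ge> \<delta>^(2*r)"
proof -
  have "(\<Prod>i<r. q (u i)) = (\<Prod>i\<in>{0..<\<kappa>}. q (u i)) * (\<Prod>i\<in>{\<kappa>..<r}. q (u i))"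
    using kr by (simp add: prod.atLeastLessThan_concat atLeast0LessThan[symmetric])
  also have "\<dots> \<le> real r^\<kappa> * q (u \<kappa>)^(r-\<kappa>)"
  proof (rule mult_mono)
    have "(\<Prod>i\<in>{0..<\<kappa>}. q (u i)) \<le> (\<Prod>i\<in>{0..<\<kappa>}. real r)"
    proof (rule prod_mono)
      fix i assume i: "i \<in> {0..<\<kappa>}"
      have "norm (u i) = 1" using pu i kr unfolding peel_def by auto
      then show "0 \<le> q (u i) \<and> q (u i) \<le> real r" using q_nonneg q_le[of "u i"] by simp
    qed
    then show "(\<Prod>i\<in>{0..<\<kappa>}. q (u i)) \<le> real r^\<kappa>" by simp
    have "(\<Prod>i\<in>{\<kappa>..<r}. q (u i)) \<le> (\<Prod>i\<in>{\<kappa>..<r}. q (u \<kappa>))"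
      by (rule prod_mono) (use q_nonneg peel_mono[OF pu] in auto)
    then show "(\<Prod>i\<in>{\<kappa>..<r}. q (u i)) \<le> q (u \<kappa>)^(r-\<kappa>)" by simp
    show "0 \<le> real r^\<kappa>" by simp
    show "0 \<le> (\<Prod>i\<in>{\<kappa>..<r}. q (u i))" by (rule prod_nonneg) (use q_nonneg in auto)
  qed
  finally show ?thesis using lam_prod[OF pu] by (simp add: mult.commute)
qed

lemma u_repr:
  assumes pu: "peel u r" and i: "i < r" and lp: "q (u i) > 0"
  shows "u i = (\<Sum>j<r. ((u i \<bullet> y j) / q (u i)) *\<^sub>R y j)"
proof -
  define v where "v = (\<Sum>j<r. (u i \<bullet> y j) *\<^sub>R y j)"
  have vV: "v \<in> V" unfolding v_def V_def by (intro span_sum span_scale) (auto intro: span_base)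
  have "u l \<bullet> v = (if l = i then q (u i) else 0)" if l: "l < r" for l
  proof -
    have "u l \<bullet> v = bf (u i) (u l)" unfolding v_def bf_def
      by (simp add: inner_sum_right inner_commute mult.commute)
    also have "\<dots> = (if l = i then q (u i) else 0)"
      using peel_bf[OF pu, of i l] peel_bf[OF pu, of l i] bf_comm[of "u i" "u l"] l i
      by (cases "l = i"; cases "i < l") (auto simp: bf_def q_def power2_eq_square)
    finally show ?thesis .
  qed
  then have "v = (\<Sum>l<r. (if l = i then q (u i) else 0) *\<^sub>R u l)"
    using u_expand[OF pu vV] by simp
  also have "\<dots> = (\<Sum>l<r. (if l = i then q (u i) *\<^sub>R u i else 0))" by (rule sum.cong) auto
  also have "\<dots> = q (u i) *\<^sub>R u i" using i by simp
  finally have "v = q (u i) *\<^sub>R u i" .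
  then have "u i = (1 / q (u i)) *\<^sub>R v" using lp by simp
  then show ?thesis unfolding v_def by (simp add: scaleR_sum_right)
qed

lemma bound_i:
  assumes pu: "peel u r" and i: "i < r" and lp: "q (u i) > 0"
  shows "\<bar>u i \<bullet> a\<bar> \<le> sqrt (real r / q (u i)) * (MAX j\<in>{..<r}. \<bar>y j \<bullet> a\<bar>)"
proof -
  define lam where "lam = q (u i)"
  define c where "c j = (u i \<bullet> y j) / lam" for j
  define M where "M = (MAX j\<in>{..<r}. \<bar>y j \<bullet> a\<bar>)"
  have Mj: "\<bar>y j \<bullet> a\<bar> \<le> M" if "j < r" for j unfolding M_def using that by (intro Max_ge) auto
  have M0: "0 \<le> M" using Mj[OF i] by simp
  have e: "u i = (\<Sum>j<r. c j *\<^sub>R y j)"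
    using u_repr[OF pu i lp] unfolding c_def lam_def .
  have "u i \<bullet> a = (\<Sum>j<r. c j *\<^sub>R y j) \<bullet> a" by (subst e) (rule refl)
  also have "\<dots> = (\<Sum>j<r. c j * (y j \<bullet> a))" by (simp add: inner_sum_left)
  finally have "u i \<bullet> a = (\<Sum>j<r. c j * (y j \<bullet> a))" .
  then have "\<bar>u i \<bullet> a\<bar> \<le> (\<Sum>j<r. \<bar>c j\<bar> * \<bar>y j \<bullet> a\<bar>)"
    by (simp add: sum_abs[THEN order_trans] abs_mult)
  also have "\<dots> \<le> (\<Sum>j<r. \<bar>c j\<bar> * M)"
    by (rule sum_mono) (use Mj in \<open>auto intro: mult_left_mono\<close>)
  also have "\<dots> = (\<Sum>j<r. \<bar>c j\<bar>) * M" by (simp add: sum_distrib_right)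
  also have "\<dots> \<le> sqrt (real r / lam) * M"
  proof (rule mult_right_mono[OF _ M0])
    have "(\<Sum>j<r. \<bar>c j\<bar>)^2 \<le> (\<Sum>j<r. \<bar>c j\<bar>^2) * card {..<r}"
      by (rule sum_squared_le_sum_of_squares)
    also have "(\<Sum>j<r. \<bar>c j\<bar>^2) = (\<Sum>j<r. (y j \<bullet> u i)^2) / lam^2"
      unfolding c_def by (simp add: power_divide sum_divide_distrib inner_commute)
    also have "\<dots> = 1 / lam" unfolding lam_def q_def[symmetric] using lp by (simp add: power2_eq_square)
    finally have "(\<Sum>j<r. \<bar>c j\<bar>)^2 \<le> real r / lam" by simp
    then show "(\<Sum>j<r. \<bar>c j\<bar>) \<le> sqrt (real r / lam)"
      by (intro real_le_rsqrt) 
  qed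
  finally show ?thesis unfolding M_def lam_def .
qed

end



lemma root_step:
  fixes x Y :: real and m :: nat
  assumes "x > 0" "m > 0" "x^m \<le> Y"
  shows "x \<le> Y powr (1 / real m)"
proof -
  have "x = (x^m) powr (1 / real m)"
    using assms by (simp add: powr_realpow[symmetric] powr_powr)
  also have "\<dots> \<le> Y powr (1 / real m)"
    using assms by (intro powr_mono2) auto
  finally show ?thesis .
qed

lemma arith_final:
  fixes lam \<delta> :: real and r s \<kappa> d :: nat
  assumes dp: "0 < \<delta>" and d1: "\<delta> \<le> 1" and rd: "r \<le> d" and kr: "\<kappa> < r" and s2: "s \<ge> 2"
    and sk: "real s * real \<kappa> \<le> real r" and lp: "lam > 0"
    and pr: "lam^(r-\<kappa>) * real r^\<kappa> \<ge> \<delta>^(2*r)"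
  shows "sqrt (real r / lam) \<le> (sqrt (real d) / \<delta>) powr (real s / (real s - 1))"
proof -
  define m where "m = r - \<kappa>"
  have m0: "m > 0" and rm: "r = m + \<kappa>" using kr unfolding m_def by auto
  have rpos: "real r > 0" using kr by simp
  have "(real r / lam)^m = real r^m / lam^m" by (simp add: power_divide)
  also have "\<dots> \<le> real r^m * (real r^\<kappa> / \<delta>^(2*r))"
  proof -
    have lm: "lam^m > 0" using lp by simp
    have "\<delta>^(2*r) > 0" using dp by simp
    then have "1 / lam^m \<le> real r^\<kappa> / \<delta>^(2*r)"
      using pr lm unfolding m_def[symmetric] by (simp add: field_simps)
    then show ?thesis using rpos
      by (metis mult_left_mono times_divide_eq_right mult.right_neutral zero_le_power less_imp_le)
  qed
  also have "\<dots> = (real r / \<delta>^2)^r"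
    by (simp add: rm power_add power_divide power_mult[symmetric] mult.commute)
  finally have h1: "(real r / lam)^m \<le> (real r / \<delta>^2)^r" .
  have X: "real r / \<delta>^2 > 0" using rpos dp by simp
  have "real r / lam \<le> ((real r / \<delta>^2)^r) powr (1 / real m)"
    by (rule root_step) (use rpos lp m0 h1 in auto)
  also have "\<dots> = (real r / \<delta>^2) powr (real r / real m)"
    using X by (simp add: powr_realpow[symmetric] powr_powr)
  also have "\<dots> \<le> (real d / \<delta>^2) powr (real r / real m)"
    using rd X by (intro powr_mono2 divide_right_mono) auto
  also have "\<dots> \<le> (real d / \<delta>^2) powr (real s / (real s - 1))"
  proof (rule powr_mono)
    have "real r * (real s - 1) \<le> real s * real m"
      using sk rm by (simp add: algebra_simps)
    then show "real r / real m \<le> real s / (real s - 1)"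
      using m0 s2 by (simp add: field_simps)
    have "\<delta>^2 \<le> 1" using dp d1 by (simp add: power_le_one)
    moreover have "1 \<le> real d" using rd kr by simp
    ultimately show "1 \<le> real d / \<delta>^2" using dp by (simp add: field_simps)
  qed
  also have "\<dots> = ((sqrt (real d) / \<delta>) powr (real s / (real s - 1)))^2"
  proof -
    define A where "A = sqrt (real d) / \<delta>"
    have A: "A > 0" unfolding A_def using dp rd kr by simp
    have "real d / \<delta>^2 = A^2" unfolding A_def by (simp add: power_divide)
    moreover have "(A^2) powr p = (A powr p)^2" for p
      using A by (simp add: power2_eq_square powr_mult)
    ultimately show ?thesis unfolding A_def by simp
  qed
  finally have "real r / lam \<le> ((sqrt (real d) / \<delta>) powr (real s / (real s - 1)))^2" .
  then have "sqrt (real r / lam) \<le> sqrt (((sqrt (real d) / \<delta>) powr (real s / (real s - 1)))^2)"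
    by (rule real_sqrt_le_mono)
  then show ?thesis by simp
qed


theorem lemma22:
  fixes y :: "nat \<Rightarrow> 'a::euclidean_space" and r s :: nat and \<delta> :: real
  assumes "0 < \<delta>" and "\<delta> \<le> 1"
    and "r \<le> DIM('a)"
    and "\<And>i. i < r \<Longrightarrow> norm (y i) = 1"
    and "\<And>i. i < r \<Longrightarrow> norm (orth_proj (orthogonal_comp (span (y ` {..<i}))) (y i)) \<ge> \<delta>"
    and "s \<ge> 2"
  shows "\<exists>z :: nat \<Rightarrow> 'a.
           (\<forall>i < nat \<lceil>real r / real s\<rceil>. norm (z i) = 1) \<and>
           (\<forall>i < nat \<lceil>real r / real s\<rceil>. \<forall>j < nat \<lceil>real r / real s\<rceil>. i \<noteq> j \<longrightarrow> orthogonal (z i) (z j)) \<and>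
           (\<forall>a :: 'a. \<forall>i < nat \<lceil>real r / real s\<rceil>.
              \<bar>z i \<bullet> a\<bar> \<le> (sqrt (real DIM('a)) / \<delta>) powr (real s / (real s - 1))
                               * (MAX j \<in> {..<r}. \<bar>y j \<bullet> a\<bar>))"
proof (cases "r = 0")
  case True
  then show ?thesis by simp
next
  case False
  then have r0: "r > 0" by simp
  interpret L: lsetting y r \<delta>
    by unfold_locales (use assms in auto)
  obtain u where pu: "L.peel u r" using L.peel_exists by blast
  define k where "k = nat \<lceil>real r / real s\<rceil>"
  have s0: "real s > 0" using assms(6) by simp
  have cc: "real_of_int \<lceil>real r / real s\<rceil> - 1 < real r / real s"
    "real r / real s \<le> real_of_int \<lceil>real r / real s\<rceil>"
    using ceiling_correct by blast+
  have cpos: "\<lceil>real r / real s\<rceil> \<ge> 1" using r0 s0 by (simp add: le_ceiling_iff)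
  have kreal: "real k = real_of_int \<lceil>real r / real s\<rceil>" unfolding k_def using cpos by simp
  have k1: "k \<ge> 1" using cpos unfolding k_def by linarith
  have kr: "k \<le> r"
  proof -
    have "real r / real s \<le> real r" using assms(6) r0 by (simp add: field_simps)
    then have "\<lceil>real r / real s\<rceil> \<le> int r" by (intro ceiling_le) simp
    then show ?thesis unfolding k_def by linarith
  qed
  define \<kappa> where "\<kappa> = k - 1"
  have kapr: "\<kappa> < r" unfolding \<kappa>_def using k1 kr by simp
  have skap: "real s * real \<kappa> \<le> real r"
  proof -
    have "real \<kappa> = real k - 1" unfolding \<kappa>_def using k1 by simp
    then have "real \<kappa> < real r / real s" using cc kreal by simp
    then show ?thesis using s0 by (simp add: field_simps)
  qed
  have lk: "L.q (u \<kappa>)^(r-\<kappa>) * real r^\<kappa> \<ge> \<delta>^(2*r)" by (rule L.lam_k[OF pu kapr])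
  have lpos: "L.q (u \<kappa>) > 0"
  proof -
    have "\<delta>^(2*r) > 0" using assms(1) by simp
    then have "L.q (u \<kappa>) \<noteq> 0" using lk r0 kapr by (auto simp: zero_power)
    then show ?thesis using L.q_nonneg[of "u \<kappa>"] by simp
  qed
  have C: "sqrt (real r / L.q (u \<kappa>)) \<le> (sqrt (real DIM('a)) / \<delta>) powr (real s / (real s - 1))"
    by (rule arith_final[OF assms(1,2,3) kapr assms(6) skap lpos lk])
  show ?thesis
  proof (intro exI[of _ u] conjI allI impI)
    fix i assume "i < nat \<lceil>real r / real s\<rceil>"
    then have ik: "i < k" unfolding k_def .
    then have i: "i < r" using kr by simp
    show "norm (u i) = 1" using pu i unfolding L.peel_def by blast
  next
    fix i j assume "i < nat \<lceil>real r / real s\<rceil>" "j < nat \<lceil>real r / real s\<rceil>" "i \<noteq> j"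
    then show "orthogonal (u i) (u j)" using L.u_orth[OF pu, of i j] kr unfolding k_def
      by (simp add: real_inner_class.orthogonal_def)
  next
    fix a :: 'a and i assume "i < nat \<lceil>real r / real s\<rceil>"
    then have ik: "i < k" unfolding k_def .
    then have i: "i < r" using kr by simp
    have ile: "i \<le> \<kappa>" unfolding \<kappa>_def using ik by simp
    have qle: "L.q (u \<kappa>) \<le> L.q (u i)" by (rule L.peel_mono[OF pu ile kapr])
    have qi: "L.q (u i) > 0" using lpos qle by simp
    define M where "M = (MAX j\<in>{..<r}. \<bar>y j \<bullet> a\<bar>)"
    have M0: "0 \<le> M" unfolding M_def using r0 by (intro order_trans[OF abs_ge_zero Max_ge]) auto
    have "\<bar>u i \<bullet> a\<bar> \<le> sqrt (real r / L.q (u i)) * M"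
      unfolding M_def by (rule L.bound_i[OF pu i qi])
    also have "\<dots> \<le> sqrt (real r / L.q (u \<kappa>)) * M"
      using qle lpos M0 by (intro mult_right_mono real_sqrt_le_mono divide_left_mono) auto
    also have "\<dots> \<le> (sqrt (real DIM('a)) / \<delta>) powr (real s / (real s - 1)) * M"
      using C M0 by (rule mult_right_mono)
    finally show "\<bar>u i \<bullet> a\<bar> \<le> (sqrt (real DIM('a)) / \<delta>) powr (real s / (real s - 1))
                               * (MAX j \<in> {..<r}. \<bar>y j \<bullet> a\<bar>)" unfolding M_def .
  qed
qed

end
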